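(* Let $q>1$ and $p$ with $\frac1p+\frac1q=1$, and set $r=(2-\frac1q)p$. If $\nu,\mu$ are probability measures on $\mathbb{R}$ (with the relevant moments finite), then $$W_2(\nu,\mu)\le W_1^{\frac1{2q}}(\nu,\mu)\,W_r^{1-\frac1{2q}}(\nu,\mu).$$ Moreover, for each $n$ there is a constant $c(n)$ such that if $\nu_i,\mu_i$, $i=1,\dots,n$, are probability measures on $\mathbb{R}$, then $$W_2\Big(\bigotimes_{i=1}^n\nu_i,\bigotimes_{i=1}^n\mu_i\Big)\le c(n)\,W_1^{\frac1{2q}}\Big(\bigotimes_{i=1}^n\nu_i,\bigotimes_{i=1}^n\mu_i\Big)\,W_r^{1-\frac1{2q}}\Big(\bigotimes_{i=1}^n\nu_i,\bigotimes_{i=1}^n\mu_i\Big).$$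
   Context: For $s\ge1$, $W_s(\nu,\mu)=\big(\inf_\pi\int|x-y|^s\pi(dx,dy)\big)^{1/s}$, the infimum over couplings $\pi$ of $\nu$ and $\mu$. *)

theory Defs
  imports "HOL-Probability.Probability"
begin

definition couplings :: "'a measure \<Rightarrow> 'b measure \<Rightarrow> ('a \<times> 'b) measure set" where
  "couplings M N = {\<pi>. prob_space \<pi> \<and> sets \<pi> = sets (M \<Otimes>\<^sub>M N)
      \<and> distr \<pi> M fst = M \<and> distr \<pi> N snd = N}"

text \<open>The infimum is taken in
  the extended nonnegative reals; it is finite whenever the relevant moments are.\<close>
definition wasserstein :: "('a \<Rightarrow> 'a \<Rightarrow> real) \<Rightarrow> real \<Rightarrow> 'a measure \<Rightarrow> 'a measure \<Rightarrow> real" where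
  "wasserstein d s M N =
     (enn2real (INF \<pi> \<in> couplings M N. \<integral>\<^sup>+ z. ennreal (d (fst z) (snd z) powr s) \<partial>\<pi>)) powr (1 / s)"

definition W_real :: "real \<Rightarrow> real measure \<Rightarrow> real measure \<Rightarrow> real" where
  "W_real s = wasserstein (\<lambda>x y. \<bar>x - y\<bar>) s"

definition eucl_dist :: "nat \<Rightarrow> (nat \<Rightarrow> real) \<Rightarrow> (nat \<Rightarrow> real) \<Rightarrow> real" where
  "eucl_dist n x y = sqrt (\<Sum>i<n. (x i - y i)\<^sup>2)"

definition W_eucl :: "nat \<Rightarrow> real \<Rightarrow> (nat \<Rightarrow> real) measure \<Rightarrow> (nat \<Rightarrow> real) measure \<Rightarrow> real" where
  "W_eucl n s = wasserstein (eucl_dist n) s"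

definition finite_moment :: "real \<Rightarrow> real measure \<Rightarrow> bool" where
  "finite_moment s M \<longleftrightarrow> (\<integral>\<^sup>+ x. ennreal (\<bar>x\<bar> powr s) \<partial>M) < \<infinity>"

definition real_prob :: "real measure \<Rightarrow> bool" where
  "real_prob M \<longleftrightarrow> prob_space M \<and> sets M = sets borel"

end

theory Submission
  imports Defs
begin


lemma holder_nn:
  fixes f g :: "'a \<Rightarrow> real" and p q a b :: real
  assumes pq: "p > 1" "q > 1" "1/p + 1/q = 1"
  and [measurable]: "f \<in> borel_measurable M" "g \<in> borel_measurable M"
  and nn: "\<And>x. f x \<ge> 0" "\<And>x. g x \<ge> 0"
  and A: "(\<integral>\<^sup>+ x. ennreal (f x powr p) \<partial>M) = ennreal a" and "a \<ge> 0"
  and B: "(\<integral>\<^sup>+ x. ennreal (g x powr q) \<partial>M) = ennreal b" and "b \<ge> 0"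
  shows "(\<integral>\<^sup>+ x. ennreal (f x * g x) \<partial>M) \<le> ennreal (a powr (1/p) * b powr (1/q))"
proof (cases "a = 0 \<or> b = 0")
  case True
  then show ?thesis
  proof
    assume "a = 0"
    then have "AE x in M. ennreal (f x powr p) = 0" using A
      by (subst nn_integral_0_iff_AE[symmetric]) auto
    then have "AE x in M. ennreal (f x * g x) = 0"
      by eventually_elim (use nn in auto)
    then have "(\<integral>\<^sup>+ x. ennreal (f x * g x) \<partial>M) = 0"
      by (subst nn_integral_0_iff_AE) auto
    then show ?thesis by simp
  next
    assume "b = 0"
    then have "AE x in M. ennreal (g x powr q) = 0" using B
      by (subst nn_integral_0_iff_AE[symmetric]) auto
    then have "AE x in M. ennreal (f x * g x) = 0"
      by eventually_elim (use nn in auto)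
    then have "(\<integral>\<^sup>+ x. ennreal (f x * g x) \<partial>M) = 0"
      by (subst nn_integral_0_iff_AE) auto
    then show ?thesis by simp
  qed
next
  case False
  then have apos: "a > 0" and bpos: "b > 0" using \<open>a \<ge> 0\<close> \<open>b \<ge> 0\<close> by auto
  define \<alpha> where "\<alpha> = a powr (1/p)"
  define \<beta> where "\<beta> = b powr (1/q)"
  have \<alpha>: "\<alpha> > 0" "\<alpha> powr p = a" using apos pq by (auto simp: \<alpha>_def powr_powr)
  have \<beta>: "\<beta> > 0" "\<beta> powr q = b" using bpos pq by (auto simp: \<beta>_def powr_powr)
  have pw: "f x * g x \<le> (\<alpha> * \<beta> / (p * a)) * f x powr p + (\<alpha> * \<beta> / (q * b)) * g x powr q" for x
  proof -
    have "(f x / \<alpha>) * (g x / \<beta>) \<le> (f x / \<alpha>) powr p / p + (g x / \<beta>) powr q / q"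
      by (rule Youngs_inequality) (use pq nn \<alpha> \<beta> in auto)
    also have "\<dots> = f x powr p / (p * a) + g x powr q / (q * b)"
      using nn \<alpha> \<beta> by (simp add: powr_divide mult.commute)
    finally have "(f x / \<alpha>) * (g x / \<beta>) \<le> f x powr p / (p * a) + g x powr q / (q * b)" .
    then have "\<alpha> * \<beta> * ((f x / \<alpha>) * (g x / \<beta>)) \<le> \<alpha> * \<beta> * (f x powr p / (p * a) + g x powr q / (q * b))"
      using \<alpha> \<beta> by (intro mult_left_mono) auto
    then show ?thesis using \<alpha> \<beta> by (simp add: field_simps)
  qed
  have "(\<integral>\<^sup>+ x. ennreal (f x * g x) \<partial>M) \<le>
     (\<integral>\<^sup>+ x. ennreal (\<alpha> * \<beta> / (p * a)) * ennreal (f x powr p) + ennreal (\<alpha> * \<beta> / (q * b)) * ennreal (g x powr q) \<partial>M)"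
    using pq \<alpha> \<beta> apos bpos
    apply (intro nn_integral_mono)
    apply (simp add: ennreal_mult'[symmetric] ennreal_plus[symmetric] del: ennreal_plus)
    using pw by (simp add: field_simps)
  also have "\<dots> = ennreal (\<alpha> * \<beta> / (p * a)) * ennreal a + ennreal (\<alpha> * \<beta> / (q * b)) * ennreal b"
    by (simp add: nn_integral_add nn_integral_cmult A B)
  also have "\<dots> = ennreal (\<alpha> * \<beta> * (1/p + 1/q))"
    using pq \<alpha> \<beta> apos bpos
    by (simp add: ennreal_mult'[symmetric] ennreal_plus[symmetric] field_simps del: ennreal_plus)
  finally show ?thesis using pq by (simp add: \<alpha>_def \<beta>_def)
qed



lemma nn_FTC_Ico:
  fixes f F :: "real \<Rightarrow> real" and a b :: real
  assumes "a \<le> b" "continuous_on {a..b} F"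
    "\<And>x. x \<in> {a<..<b} \<Longrightarrow> (F has_real_derivative f x) (at x)"
    "\<And>x. x \<in> {a..b} \<Longrightarrow> f x \<ge> 0"
  shows "(\<integral>\<^sup>+ x. ennreal (f x) * indicator {a..<b} x \<partial>lborel) = ennreal (F b - F a)"
proof -
  have "(f has_integral (F b - F a)) {a..b}"
    using assms by (intro fundamental_theorem_of_calculus_interior)
      (auto simp: has_real_derivative_iff_has_vector_derivative[symmetric])
  then have *: "(\<integral>\<^sup>+ x. ennreal (f x) * indicator {a..b} x \<partial>lborel) = ennreal (F b - F a)"
    using assms(4) by (intro nn_integral_has_integral_lebesgue') auto
  have "(\<integral>\<^sup>+ x. ennreal (f x) * indicator {a..<b} x \<partial>lborel) = (\<integral>\<^sup>+ x. ennreal (f x) * indicator {a..b} x \<partial>lborel)"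
    by (intro nn_integral_cong_AE) (use AE_lborel_singleton[of b] in \<open>eventually_elim, auto split: split_indicator\<close>)
  then show ?thesis using * by simp
qed

definition kk :: "real \<Rightarrow> real \<Rightarrow> real \<Rightarrow> real" where
  "kk s a b = (if a \<le> b then s * (s - 1) * (b - a) powr (s - 2) else 0)"

lemma kk_nonneg: "s \<ge> 1 \<Longrightarrow> kk s a b \<ge> 0"
  by (auto simp: kk_def)

lemma kk_measurable[measurable]: "(\<lambda>(a,b). kk s a b) \<in> borel_measurable (borel \<Otimes>\<^sub>M borel)"
  unfolding kk_def by measurable

lemma inner_kk:
  assumes s: "s > 2"
  shows "(\<integral>\<^sup>+ b. ennreal (kk s a b * (if x \<le> a \<and> b < y then 1 else 0)) \<partial>lborel)
     = ennreal (if x \<le> a \<and> a < y then s * (y - a) powr (s - 1) else 0)"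
proof (cases "x \<le> a \<and> a < y")
  case True
  have "(\<integral>\<^sup>+ b. ennreal (kk s a b * (if x \<le> a \<and> b < y then 1 else 0)) \<partial>lborel)
     = (\<integral>\<^sup>+ b. ennreal (s * (s - 1) * (b - a) powr (s - 2)) * indicator {a..<y} b \<partial>lborel)"
    using True by (intro nn_integral_cong) (auto simp: kk_def split: split_indicator)
  also have "\<dots> = ennreal ((\<lambda>b. s * (b - a) powr (s - 1)) y - (\<lambda>b. s * (b - a) powr (s - 1)) a)"
  proof (rule nn_FTC_Ico)
    show "a \<le> y" using True by simp
    show "continuous_on {a..y} (\<lambda>b. s * (b - a) powr (s - 1))"
      using s by (intro continuous_intros continuous_on_powr') auto
    fix b assume "b \<in> {a<..<y}"
    then show "((\<lambda>b. s * (b - a) powr (s - 1)) has_real_derivative s * (s - 1) * (b - a) powr (s - 2)) (at b)"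
      by (auto intro!: derivative_eq_intros simp: field_simps)
  next
    fix b show "b \<in> {a..y} \<Longrightarrow> 0 \<le> s * (s - 1) * (b - a) powr (s - 2)" using s by auto
  qed
  finally show ?thesis using True by simp
next
  case False
  then show ?thesis
    by (subst nn_integral_0_iff_AE[THEN iffD2]) (auto simp: kk_def)
qed

lemma HH_eq:
  assumes s: "s > 2"
  shows "(\<integral>\<^sup>+ a. \<integral>\<^sup>+ b. ennreal (kk s a b * (if x \<le> a \<and> b < y then 1 else 0)) \<partial>lborel \<partial>lborel)
     = ennreal (if x < y then (y - x) powr s else 0)"
proof (cases "x < y")
  case True
  have "(\<integral>\<^sup>+ a. \<integral>\<^sup>+ b. ennreal (kk s a b * (if x \<le> a \<and> b < y then 1 else 0)) \<partial>lborel \<partial>lborel)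
     = (\<integral>\<^sup>+ a. ennreal (s * (y - a) powr (s - 1)) * indicator {x..<y} a \<partial>lborel)"
    by (intro nn_integral_cong) (auto simp: inner_kk[OF s] split: split_indicator)
  also have "\<dots> = ennreal ((\<lambda>a. -((y - a) powr s)) y - (\<lambda>a. -((y - a) powr s)) x)"
  proof (rule nn_FTC_Ico)
    show "x \<le> y" using True by simp
    show "continuous_on {x..y} (\<lambda>a. -((y - a) powr s))"
      using s by (intro continuous_intros continuous_on_powr') auto
    fix a assume "a \<in> {x<..<y}"
    then show "((\<lambda>a. -((y - a) powr s)) has_real_derivative s * (y - a) powr (s - 1)) (at a)"
      by (auto intro!: derivative_eq_intros simp: field_simps)
  next
    fix a show "a \<in> {x..y} \<Longrightarrow> 0 \<le> s * (y - a) powr (s - 1)" using s by auto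
  qed
  finally show ?thesis using True by simp
next
  case False
  then show ?thesis
    by (subst nn_integral_0_iff_AE[THEN iffD2]) (auto simp: inner_kk[OF s])
qed



abbreviation "cst s \<pi> \<equiv> \<integral>\<^sup>+ z. ennreal (\<bar>fst z - snd z\<bar> powr s) \<partial>\<pi>"

definition P1 :: "(real \<times> real) measure \<Rightarrow> real \<Rightarrow> real \<Rightarrow> ennreal" where
  "P1 \<pi> a b = emeasure \<pi> {z \<in> space \<pi>. fst z \<le> a \<and> b < snd z}"
definition P2 :: "(real \<times> real) measure \<Rightarrow> real \<Rightarrow> real \<Rightarrow> ennreal" where
  "P2 \<pi> a b = emeasure \<pi> {z \<in> space \<pi>. snd z \<le> a \<and> b < fst z}"

lemma pw_rep:
  assumes s: "s > 2"
  shows "ennreal (\<bar>x - y\<bar> powr s) = (\<integral>\<^sup>+ a. \<integral>\<^sup>+ b. ennreal (kk s a b) *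
     ((if x \<le> a \<and> b < y then 1 else 0) + (if y \<le> a \<and> b < x then 1 else 0)) \<partial>lborel \<partial>lborel)"
proof -
  have "(\<integral>\<^sup>+ a. \<integral>\<^sup>+ b. ennreal (kk s a b) *
     ((if x \<le> a \<and> b < y then 1 else 0) + (if y \<le> a \<and> b < x then 1 else 0)) \<partial>lborel \<partial>lborel)
   = (\<integral>\<^sup>+ a. (\<integral>\<^sup>+ b. ennreal (kk s a b * (if x \<le> a \<and> b < y then 1 else 0)) \<partial>lborel)
        + (\<integral>\<^sup>+ b. ennreal (kk s a b * (if y \<le> a \<and> b < x then 1 else 0)) \<partial>lborel) \<partial>lborel)"
    apply (intro nn_integral_cong)
    apply (subst nn_integral_add[symmetric])
      apply (simp_all)
    apply (intro nn_integral_cong)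
    using kk_nonneg[of s] s by (auto simp: distrib_left)
  also have "\<dots> = (\<integral>\<^sup>+ a. \<integral>\<^sup>+ b. ennreal (kk s a b * (if x \<le> a \<and> b < y then 1 else 0)) \<partial>lborel \<partial>lborel)
      + (\<integral>\<^sup>+ a. \<integral>\<^sup>+ b. ennreal (kk s a b * (if y \<le> a \<and> b < x then 1 else 0)) \<partial>lborel \<partial>lborel)"
    by (intro nn_integral_add) auto
  also have "\<dots> = ennreal (\<bar>x - y\<bar> powr s)"
    unfolding HH_eq[OF s] by auto
  finally show ?thesis ..
qed

lemma pw_rep1:
  "ennreal (\<bar>x - y\<bar> powr 1) = (\<integral>\<^sup>+ a. ((if x \<le> a \<and> a < y then 1 else 0) + (if y \<le> a \<and> a < x then 1 else 0)) \<partial>lborel)"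
proof -
  have "(\<integral>\<^sup>+ a. ((if x \<le> a \<and> a < y then 1 else 0) + (if y \<le> a \<and> a < x then 1 else 0)) \<partial>lborel)
     = (\<integral>\<^sup>+ a. indicator {x..<y} a \<partial>lborel) + (\<integral>\<^sup>+ a. indicator {y..<x} a \<partial>lborel)"
    by (subst nn_integral_add[symmetric]) (auto intro!: nn_integral_cong split: split_indicator)
  also have "\<dots> = ennreal (\<bar>x - y\<bar> powr 1)"
    by (cases x y rule: linorder_cases) auto
  finally show ?thesis ..
qed

lemma rep_s:
  assumes s: "s > 2" and ps: "prob_space \<pi>" and sets[measurable_cong]: "sets \<pi> = sets (borel \<Otimes>\<^sub>M borel)"
  shows "cst s \<pi> = (\<integral>\<^sup>+ a. \<integral>\<^sup>+ b. ennreal (kk s a b) * (P1 \<pi> a b + P2 \<pi> a b) \<partial>lborel \<partial>lborel)"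
proof -
  interpret pair_sigma_finite \<pi> lborel
    using ps by (simp add: pair_sigma_finite_def lborel.sigma_finite_measure_axioms prob_space_imp_sigma_finite)
  define G where "G z a b = ennreal (kk s a b) *
     ((if fst z \<le> a \<and> b < snd z then 1 else 0) + (if snd z \<le> a \<and> b < fst z then 1 else 0))" for z :: "real \<times> real" and a b
  have Gm0[measurable]: "(\<lambda>x. G (fst (fst x)) (snd (fst x)) (snd x)) \<in> borel_measurable ((\<pi> \<Otimes>\<^sub>M lborel) \<Otimes>\<^sub>M lborel)"
    unfolding G_def by measurable
  have Gm[measurable]: "(\<lambda>((z, a), b). G z a b) \<in> borel_measurable ((\<pi> \<Otimes>\<^sub>M lborel) \<Otimes>\<^sub>M lborel)"
    using Gm0 by (simp add: split_beta')
  have Gm2[measurable]: "(\<lambda>(z, b). G z a b) \<in> borel_measurable (\<pi> \<Otimes>\<^sub>M lborel)" for a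
    unfolding G_def by measurable
  have "cst s \<pi> = (\<integral>\<^sup>+ z. \<integral>\<^sup>+ a. \<integral>\<^sup>+ b. G z a b \<partial>lborel \<partial>lborel \<partial>\<pi>)"
    unfolding G_def by (intro nn_integral_cong) (simp add: pw_rep[OF s])
  also have "\<dots> = (\<integral>\<^sup>+ a. \<integral>\<^sup>+ z. \<integral>\<^sup>+ b. G z a b \<partial>lborel \<partial>\<pi> \<partial>lborel)"
    by (rule Fubini'[symmetric]) measurable
  also have "\<dots> = (\<integral>\<^sup>+ a. \<integral>\<^sup>+ b. \<integral>\<^sup>+ z. G z a b \<partial>\<pi> \<partial>lborel \<partial>lborel)"
  proof (intro nn_integral_cong)
    fix a
    show "(\<integral>\<^sup>+ z. \<integral>\<^sup>+ b. G z a b \<partial>lborel \<partial>\<pi>) = (\<integral>\<^sup>+ b. \<integral>\<^sup>+ z. G z a b \<partial>\<pi> \<partial>lborel)"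
      by (rule Fubini'[symmetric]) (rule Gm2)
  qed
  also have "\<dots> = (\<integral>\<^sup>+ a. \<integral>\<^sup>+ b. ennreal (kk s a b) * (P1 \<pi> a b + P2 \<pi> a b) \<partial>lborel \<partial>lborel)"
  proof (intro nn_integral_cong)
    fix a b
    have "(\<integral>\<^sup>+ z. G z a b \<partial>\<pi>) = ennreal (kk s a b) * ((\<integral>\<^sup>+ z. indicator {z \<in> space \<pi>. fst z \<le> a \<and> b < snd z} z \<partial>\<pi>)
       + (\<integral>\<^sup>+ z. indicator {z \<in> space \<pi>. snd z \<le> a \<and> b < fst z} z \<partial>\<pi>))"
      unfolding G_def
      apply (subst nn_integral_add[symmetric], simp, simp)
      apply (subst nn_integral_cmult[symmetric], simp)
      by (intro nn_integral_cong) (auto split: split_indicator)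
    also have "\<dots> = ennreal (kk s a b) * (P1 \<pi> a b + P2 \<pi> a b)"
      unfolding P1_def P2_def by (subst (1 2) nn_integral_indicator) auto
    finally show "(\<integral>\<^sup>+ z. G z a b \<partial>\<pi>) = ennreal (kk s a b) * (P1 \<pi> a b + P2 \<pi> a b)" .
  qed
  finally show ?thesis .
qed

lemma rep_1:
  assumes ps: "prob_space \<pi>" and sets[measurable_cong]: "sets \<pi> = sets (borel \<Otimes>\<^sub>M borel)"
  shows "cst 1 \<pi> = (\<integral>\<^sup>+ a. (P1 \<pi> a a + P2 \<pi> a a) \<partial>lborel)"
proof -
  interpret pair_sigma_finite \<pi> lborel
    using ps by (simp add: pair_sigma_finite_def lborel.sigma_finite_measure_axioms prob_space_imp_sigma_finite)
  define G where "G z a = ((if fst z \<le> a \<and> a < snd z then 1 else 0) + (if snd z \<le> a \<and> a < fst z then 1 else 0) :: ennreal)"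
    for z :: "real \<times> real" and a
  have Gm[measurable]: "(\<lambda>(z, a). G z a) \<in> borel_measurable (\<pi> \<Otimes>\<^sub>M lborel)"
    unfolding G_def by measurable
  have "cst 1 \<pi> = (\<integral>\<^sup>+ z. \<integral>\<^sup>+ a. G z a \<partial>lborel \<partial>\<pi>)"
    unfolding G_def by (intro nn_integral_cong) (simp only: pw_rep1)
  also have "\<dots> = (\<integral>\<^sup>+ a. \<integral>\<^sup>+ z. G z a \<partial>\<pi> \<partial>lborel)"
    by (rule Fubini'[symmetric]) measurable
  also have "\<dots> = (\<integral>\<^sup>+ a. (P1 \<pi> a a + P2 \<pi> a a) \<partial>lborel)"
  proof (intro nn_integral_cong)
    fix a
    have "(\<integral>\<^sup>+ z. G z a \<partial>\<pi>) = ((\<integral>\<^sup>+ z. indicator {z \<in> space \<pi>. fst z \<le> a \<and> a < snd z} z \<partial>\<pi>)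
       + (\<integral>\<^sup>+ z. indicator {z \<in> space \<pi>. snd z \<le> a \<and> a < fst z} z \<partial>\<pi>))"
      unfolding G_def
      apply (subst nn_integral_add[symmetric], simp, simp)
      by (intro nn_integral_cong) (auto split: split_indicator)
    also have "\<dots> = P1 \<pi> a a + P2 \<pi> a a"
      unfolding P1_def P2_def by (subst (1 2) nn_integral_indicator) auto
    finally show "(\<integral>\<^sup>+ z. G z a \<partial>\<pi>) = P1 \<pi> a a + P2 \<pi> a a" .
  qed
  finally show ?thesis .
qed



definition qf :: "real measure \<Rightarrow> real \<Rightarrow> real" where
  "qf M \<omega> = Inf {x. \<omega> \<le> cdf M x}"

definition "Om = restrict_space lborel {0<..<1::real}"

definition qc :: "real measure \<Rightarrow> real measure \<Rightarrow> (real \<times> real) measure" where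
  "qc \<nu> \<mu> = distr Om (borel \<Otimes>\<^sub>M borel) (\<lambda>\<omega>. (qf \<nu> \<omega>, qf \<mu> \<omega>))"

lemma real_prob_cdf: "real_prob M \<Longrightarrow> cdf_distribution M"
  unfolding real_prob_def cdf_distribution_def real_distribution_def real_distribution_axioms_def by auto

lemma prob_Om: "prob_space Om"
  unfolding Om_def by (auto simp add: emeasure_restrict_space space_restrict_space intro!: prob_spaceI)

lemma space_Om: "space Om = {0<..<1}"
  unfolding Om_def by (simp add: space_restrict_space)

lemma qf_meas[measurable]:
  assumes "real_prob M" shows "qf M \<in> borel_measurable Om"
proof -
  interpret cdf_distribution M using real_prob_cdf[OF assms] .
  have "I \<in> borel_measurable (restrict_space borel {0<..<1})" by (rule measurable_CI)
  then show ?thesis unfolding Om_def qf_def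
    by (subst measurable_cong_sets[OF sets_restrict_space_cong[OF sets_lborel] refl])
qed

lemma qf_distr:
  assumes "real_prob M" shows "distr Om M (qf M) = M"
proof -
  interpret cdf_distribution M using real_prob_cdf[OF assms] .
  have "distr Om M (qf M) = distr Om borel (qf M)"
    by (intro distr_cong) auto
  also have "\<dots> = M" unfolding Om_def qf_def by (rule distr_I_eq_M)
  finally show ?thesis .
qed

lemma qf_pseudo:
  assumes "real_prob M" "0 < \<omega>" "\<omega> < 1" shows "\<omega> \<le> cdf M x \<longleftrightarrow> qf M \<omega> \<le> x"
proof -
  interpret cdf_distribution M using real_prob_cdf[OF assms(1)] .
  show ?thesis unfolding qf_def using pseudoinverse assms(2,3) by blast
qed

lemma qc_coupling:
  assumes nu: "real_prob \<nu>" and mu: "real_prob \<mu>"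
  shows "qc \<nu> \<mu> \<in> couplings \<nu> \<mu>"
proof -
  interpret Om: prob_space Om by (rule prob_Om)
  have T[measurable]: "(\<lambda>\<omega>. (qf \<nu> \<omega>, qf \<mu> \<omega>)) \<in> Om \<rightarrow>\<^sub>M borel \<Otimes>\<^sub>M borel"
    using nu mu by measurable
  have "prob_space (qc \<nu> \<mu>)" unfolding qc_def by (rule Om.prob_space_distr[OF T])
  moreover have "sets (qc \<nu> \<mu>) = sets (\<nu> \<Otimes>\<^sub>M \<mu>)"
    using nu mu unfolding qc_def real_prob_def by (auto intro!: sets_pair_measure_cong)
  moreover have "distr (qc \<nu> \<mu>) \<nu> fst = \<nu>"
    unfolding qc_def using nu mu
    by (subst distr_distr) (auto simp: comp_def qf_distr real_prob_def)
  moreover have "distr (qc \<nu> \<mu>) \<mu> snd = \<mu>"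
    unfolding qc_def using nu mu
    by (subst distr_distr) (auto simp: comp_def qf_distr real_prob_def)
  ultimately show ?thesis unfolding couplings_def by auto
qed

lemma set1[measurable]: "{z::real\<times>real. fst z \<le> a \<and> b < snd z} \<in> sets (borel \<Otimes>\<^sub>M borel)"
proof -
  have "{z \<in> space (borel \<Otimes>\<^sub>M borel). fst z \<le> a \<and> b < (snd z::real)} \<in> sets (borel \<Otimes>\<^sub>M borel)" by measurable
  then show ?thesis by (simp add: space_pair_measure)
qed

lemma set2[measurable]: "{z::real\<times>real. snd z \<le> a \<and> b < fst z} \<in> sets (borel \<Otimes>\<^sub>M borel)"
proof -
  have "{z \<in> space (borel \<Otimes>\<^sub>M borel). snd z \<le> a \<and> b < (fst z::real)} \<in> sets (borel \<Otimes>\<^sub>M borel)" by measurable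
  then show ?thesis by (simp add: space_pair_measure)
qed

lemma P1_qc:
  assumes nu: "real_prob \<nu>" and mu: "real_prob \<mu>"
  shows "P1 (qc \<nu> \<mu>) a b \<le> ennreal (cdf \<nu> a - cdf \<mu> b)"
proof -
  have T[measurable]: "(\<lambda>\<omega>. (qf \<nu> \<omega>, qf \<mu> \<omega>)) \<in> Om \<rightarrow>\<^sub>M borel \<Otimes>\<^sub>M borel"
    using nu mu by measurable
  define A where "A = {\<omega> \<in> {0<..<1::real}. qf \<nu> \<omega> \<le> a \<and> b < qf \<mu> \<omega>}"
  have "P1 (qc \<nu> \<mu>) a b = emeasure Om ((\<lambda>\<omega>. (qf \<nu> \<omega>, qf \<mu> \<omega>)) -` {z. fst z \<le> a \<and> b < snd z} \<inter> space Om)"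
    unfolding P1_def qc_def
    by (subst emeasure_distr) (auto simp: space_pair_measure intro!: arg_cong2[where f=emeasure])
  also have "(\<lambda>\<omega>. (qf \<nu> \<omega>, qf \<mu> \<omega>)) -` {z. fst z \<le> a \<and> b < snd z} \<inter> space Om = A"
    by (auto simp: A_def space_Om)
  also have "emeasure Om A = emeasure lborel A"
    unfolding Om_def by (rule emeasure_restrict_space) (auto simp: A_def)
  also have "\<dots> \<le> emeasure lborel {cdf \<mu> b <.. cdf \<nu> a}"
  proof (rule emeasure_mono)
    show "A \<subseteq> {cdf \<mu> b<..cdf \<nu> a}"
      using qf_pseudo[OF nu] qf_pseudo[OF mu] by (force simp: A_def not_le)
  qed auto
  also have "\<dots> = ennreal (cdf \<nu> a - cdf \<mu> b)"
    by (cases "cdf \<mu> b \<le> cdf \<nu> a") (auto simp: ennreal_eq_0_iff)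
  finally show ?thesis .
qed

lemma P2_qc:
  assumes nu: "real_prob \<nu>" and mu: "real_prob \<mu>"
  shows "P2 (qc \<nu> \<mu>) a b \<le> ennreal (cdf \<mu> a - cdf \<nu> b)"
proof -
  have T[measurable]: "(\<lambda>\<omega>. (qf \<nu> \<omega>, qf \<mu> \<omega>)) \<in> Om \<rightarrow>\<^sub>M borel \<Otimes>\<^sub>M borel"
    using nu mu by measurable
  define A where "A = {\<omega> \<in> {0<..<1::real}. qf \<mu> \<omega> \<le> a \<and> b < qf \<nu> \<omega>}"
  have "P2 (qc \<nu> \<mu>) a b = emeasure Om ((\<lambda>\<omega>. (qf \<nu> \<omega>, qf \<mu> \<omega>)) -` {z. snd z \<le> a \<and> b < fst z} \<inter> space Om)"
    unfolding P2_def qc_def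
    by (subst emeasure_distr) (auto simp: space_pair_measure intro!: arg_cong2[where f=emeasure])
  also have "(\<lambda>\<omega>. (qf \<nu> \<omega>, qf \<mu> \<omega>)) -` {z. snd z \<le> a \<and> b < fst z} \<inter> space Om = A"
    by (auto simp: A_def space_Om)
  also have "emeasure Om A = emeasure lborel A"
    unfolding Om_def by (rule emeasure_restrict_space) (auto simp: A_def)
  also have "\<dots> \<le> emeasure lborel {cdf \<nu> b <.. cdf \<mu> a}"
  proof (rule emeasure_mono)
    show "A \<subseteq> {cdf \<nu> b<..cdf \<mu> a}"
      using qf_pseudo[OF nu] qf_pseudo[OF mu] by (force simp: A_def not_le)
  qed auto
  also have "\<dots> = ennreal (cdf \<mu> a - cdf \<nu> b)"
    by (cases "cdf \<nu> b \<le> cdf \<mu> a") (auto simp: ennreal_eq_0_iff)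
  finally show ?thesis .
qed

lemma marg_fst:
  assumes "\<pi> \<in> couplings \<nu> \<mu>" "real_prob \<nu>" "real_prob \<mu>"
  shows "measure \<pi> {z \<in> space \<pi>. fst z \<le> a} = cdf \<nu> a"
proof -
  have s[measurable_cong]: "sets \<pi> = sets (borel \<Otimes>\<^sub>M borel)" and d: "distr \<pi> \<nu> fst = \<nu>"
    using assms unfolding couplings_def real_prob_def by (auto intro!: sets_pair_measure_cong)
  have sn[measurable_cong]: "sets \<nu> = sets borel" using assms(2) by (simp add: real_prob_def)
  have "cdf \<nu> a = measure (distr \<pi> \<nu> fst) {..a}" by (simp add: d cdf_def)
  also have "\<dots> = measure \<pi> (fst -` {..a} \<inter> space \<pi>)"
    by (rule measure_distr) auto
  finally show ?thesis by (auto intro!: arg_cong2[where f=measure])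
qed

lemma marg_snd:
  assumes "\<pi> \<in> couplings \<nu> \<mu>" "real_prob \<nu>" "real_prob \<mu>"
  shows "measure \<pi> {z \<in> space \<pi>. snd z \<le> a} = cdf \<mu> a"
proof -
  have s[measurable_cong]: "sets \<pi> = sets (borel \<Otimes>\<^sub>M borel)" and d: "distr \<pi> \<mu> snd = \<mu>"
    using assms unfolding couplings_def real_prob_def by (auto intro!: sets_pair_measure_cong)
  have sn[measurable_cong]: "sets \<mu> = sets borel" using assms(3) by (simp add: real_prob_def)
  have "cdf \<mu> a = measure (distr \<pi> \<mu> snd) {..a}" by (simp add: d cdf_def)
  also have "\<dots> = measure \<pi> (snd -` {..a} \<inter> space \<pi>)"
    by (rule measure_distr) auto
  finally show ?thesis by (auto intro!: arg_cong2[where f=measure])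
qed

lemma P1_low:
  assumes c: "\<pi> \<in> couplings \<nu> \<mu>" and nu: "real_prob \<nu>" and mu: "real_prob \<mu>"
  shows "ennreal (cdf \<nu> a - cdf \<mu> b) \<le> P1 \<pi> a b"
proof -
  have s[measurable_cong]: "sets \<pi> = sets (borel \<Otimes>\<^sub>M borel)" and ps: "prob_space \<pi>"
    using c nu mu unfolding couplings_def real_prob_def by (auto intro!: sets_pair_measure_cong)
  interpret prob_space \<pi> by fact
  have "measure \<pi> {z \<in> space \<pi>. fst z \<le> a} \<le> measure \<pi> ({z \<in> space \<pi>. fst z \<le> a \<and> b < snd z} \<union> {z \<in> space \<pi>. snd z \<le> b})"
    by (intro finite_measure_mono) auto
  also have "\<dots> \<le> measure \<pi> {z \<in> space \<pi>. fst z \<le> a \<and> b < snd z} + measure \<pi> {z \<in> space \<pi>. snd z \<le> b}"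
    by (intro measure_Un_le) auto
  finally have "cdf \<nu> a - cdf \<mu> b \<le> measure \<pi> {z \<in> space \<pi>. fst z \<le> a \<and> b < snd z}"
    using marg_fst[OF c nu mu] marg_snd[OF c nu mu] by simp
  then show ?thesis unfolding P1_def emeasure_eq_measure by (rule ennreal_leI)
qed

lemma P2_low:
  assumes c: "\<pi> \<in> couplings \<nu> \<mu>" and nu: "real_prob \<nu>" and mu: "real_prob \<mu>"
  shows "ennreal (cdf \<mu> a - cdf \<nu> b) \<le> P2 \<pi> a b"
proof -
  have s[measurable_cong]: "sets \<pi> = sets (borel \<Otimes>\<^sub>M borel)" and ps: "prob_space \<pi>"
    using c nu mu unfolding couplings_def real_prob_def by (auto intro!: sets_pair_measure_cong)
  interpret prob_space \<pi> by fact
  have "measure \<pi> {z \<in> space \<pi>. snd z \<le> a} \<le> measure \<pi> ({z \<in> space \<pi>. snd z \<le> a \<and> b < fst z} \<union> {z \<in> space \<pi>. fst z \<le> b})"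
    by (intro finite_measure_mono) auto
  also have "\<dots> \<le> measure \<pi> {z \<in> space \<pi>. snd z \<le> a \<and> b < fst z} + measure \<pi> {z \<in> space \<pi>. fst z \<le> b}"
    by (intro measure_Un_le) auto
  finally have "cdf \<mu> a - cdf \<nu> b \<le> measure \<pi> {z \<in> space \<pi>. snd z \<le> a \<and> b < fst z}"
    using marg_fst[OF c nu mu] marg_snd[OF c nu mu] by simp
  then show ?thesis unfolding P2_def emeasure_eq_measure by (rule ennreal_leI)
qed

lemma qc_opt:
  assumes c: "\<pi> \<in> couplings \<nu> \<mu>" and nu: "real_prob \<nu>" and mu: "real_prob \<mu>" and s: "s = 1 \<or> s > 2"
  shows "cst s (qc \<nu> \<mu>) \<le> cst s \<pi>"
proof -
  have qcc: "qc \<nu> \<mu> \<in> couplings \<nu> \<mu>" by (rule qc_coupling[OF nu mu])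
  have sets: "sets \<pi> = sets (borel \<Otimes>\<^sub>M borel)" "sets (qc \<nu> \<mu>) = sets (borel \<Otimes>\<^sub>M borel)"
    and ps: "prob_space \<pi>" "prob_space (qc \<nu> \<mu>)"
    using c qcc nu mu unfolding couplings_def real_prob_def by (auto intro!: sets_pair_measure_cong)
  have le1: "P1 (qc \<nu> \<mu>) a b \<le> P1 \<pi> a b" for a b
    using P1_qc[OF nu mu] P1_low[OF c nu mu] order_trans by blast
  have le2: "P2 (qc \<nu> \<mu>) a b \<le> P2 \<pi> a b" for a b
    using P2_qc[OF nu mu] P2_low[OF c nu mu] order_trans by blast
  from s show ?thesis
  proof
    assume s1: "s = 1"
    show ?thesis unfolding s1
      apply (subst rep_1[OF ps(1) sets(1)], subst rep_1[OF ps(2) sets(2)])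
      by (intro nn_integral_mono add_mono le1 le2)
  next
    assume "s > 2"
    then show ?thesis
      using le1 le2
      by (simp add: rep_s[OF _ ps(1) sets(1)] rep_s[OF _ ps(2) sets(2)] add_mono nn_integral_mono mult_left_mono)
  qed
qed



lemma pow_bound: "(d::real) \<ge> 0 \<Longrightarrow> 0 < t \<Longrightarrow> t \<le> r \<Longrightarrow> d powr t \<le> 1 + d powr r"
proof (cases "d \<le> 1")
  case True
  assume "d \<ge> 0" "0 < t" "t \<le> r"
  then have "d powr t \<le> 1"
    using True by (cases "d = 0") (auto intro: powr_le1)
  then show ?thesis using \<open>d \<ge> 0\<close> using powr_ge_zero[of d r] by linarith
next
  case False
  assume "d \<ge> 0" "0 < t" "t \<le> r"
  then have "d powr t \<le> d powr r" using False by (intro powr_mono) auto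
  then show ?thesis by simp
qed

lemma diff_pow_bound: "r \<ge> 1 \<Longrightarrow> \<bar>x - y\<bar> powr r \<le> 2 powr r * (\<bar>x::real\<bar> powr r + \<bar>y\<bar> powr r)"
proof -
  assume r: "r \<ge> 1"
  define m where "m = max \<bar>x\<bar> \<bar>y\<bar>"
  have "\<bar>x - y\<bar> \<le> 2 * m" unfolding m_def by auto
  then have "\<bar>x - y\<bar> powr r \<le> (2 * m) powr r" using r by (intro powr_mono2) auto
  also have "\<dots> = 2 powr r * m powr r" by (simp add: powr_mult m_def)
  also have "m powr r \<le> \<bar>x\<bar> powr r + \<bar>y\<bar> powr r" unfolding m_def by (auto simp: max_def)
  finally show ?thesis by simp
qed

lemma coupling_props:
  assumes "\<pi> \<in> couplings \<nu> \<mu>" "real_prob \<nu>" "real_prob \<mu>"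
  shows "prob_space \<pi>" "sets \<pi> = sets (borel \<Otimes>\<^sub>M borel)" "distr \<pi> \<nu> fst = \<nu>" "distr \<pi> \<mu> snd = \<mu>"
  using assms unfolding couplings_def real_prob_def by (auto intro!: sets_pair_measure_cong)

lemma cst_r_fin:
  assumes c: "\<pi> \<in> couplings \<nu> \<mu>" and nu: "real_prob \<nu>" and mu: "real_prob \<mu>"
    and r: "r \<ge> 1" and m: "finite_moment r \<nu>" "finite_moment r \<mu>"
  shows "cst r \<pi> < \<infinity>"
proof -
  note cp = coupling_props[OF c nu mu]
  have s[measurable_cong]: "sets \<pi> = sets (borel \<Otimes>\<^sub>M borel)" by (rule cp(2))
  have sn[measurable_cong]: "sets \<nu> = sets borel" "sets \<mu> = sets borel" using nu mu by (auto simp: real_prob_def)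
  have e1: "(\<integral>\<^sup>+ z. ennreal (\<bar>fst z\<bar> powr r) \<partial>\<pi>) = (\<integral>\<^sup>+ x. ennreal (\<bar>x\<bar> powr r) \<partial>\<nu>)"
    using nn_integral_distr[of fst \<pi> \<nu> "\<lambda>x. ennreal (\<bar>x\<bar> powr r)"] cp(3) by simp
  have e2: "(\<integral>\<^sup>+ z. ennreal (\<bar>snd z\<bar> powr r) \<partial>\<pi>) = (\<integral>\<^sup>+ x. ennreal (\<bar>x\<bar> powr r) \<partial>\<mu>)"
    using nn_integral_distr[of snd \<pi> \<mu> "\<lambda>x. ennreal (\<bar>x\<bar> powr r)"] cp(4) by simp
  have "cst r \<pi> \<le> (\<integral>\<^sup>+ z. ennreal (2 powr r) * (ennreal (\<bar>fst z\<bar> powr r) + ennreal (\<bar>snd z\<bar> powr r)) \<partial>\<pi>)"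
    by (intro nn_integral_mono)
       (simp add: ennreal_mult'[symmetric] ennreal_plus[symmetric] diff_pow_bound[OF r] del: ennreal_plus)
  also have "\<dots> = ennreal (2 powr r) * ((\<integral>\<^sup>+ x. ennreal (\<bar>x\<bar> powr r) \<partial>\<nu>) + (\<integral>\<^sup>+ x. ennreal (\<bar>x\<bar> powr r) \<partial>\<mu>))"
    by (simp add: nn_integral_cmult nn_integral_add e1 e2)
  also have "\<dots> < \<infinity>" using m unfolding finite_moment_def
    by (simp add: ennreal_mult_less_top)
  finally show ?thesis .
qed

lemma cst_t_fin:
  assumes c: "\<pi> \<in> couplings \<nu> \<mu>" and nu: "real_prob \<nu>" and mu: "real_prob \<mu>"
    and t: "0 < t" "t \<le> r" and fin: "cst r \<pi> < \<infinity>"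
  shows "cst t \<pi> < \<infinity>"
proof -
  note cp = coupling_props[OF c nu mu]
  interpret prob_space \<pi> by (rule cp(1))
  have s[measurable_cong]: "sets \<pi> = sets (borel \<Otimes>\<^sub>M borel)" by (rule cp(2))
  have "cst t \<pi> \<le> (\<integral>\<^sup>+ z. 1 + ennreal (\<bar>fst z - snd z\<bar> powr r) \<partial>\<pi>)"
  proof (intro nn_integral_mono)
    fix z :: "real \<times> real"
    have "ennreal (\<bar>fst z - snd z\<bar> powr t) \<le> ennreal (1 + \<bar>fst z - snd z\<bar> powr r)"
      by (intro ennreal_leI pow_bound t) auto
    also have "\<dots> = 1 + ennreal (\<bar>fst z - snd z\<bar> powr r)" by (subst ennreal_plus) auto
    finally show "ennreal (\<bar>fst z - snd z\<bar> powr t) \<le> 1 + ennreal (\<bar>fst z - snd z\<bar> powr r)" .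
  qed
  also have "\<dots> = 1 + cst r \<pi>"
    by (simp add: nn_integral_add emeasure_space_1)
  also have "\<dots> < \<infinity>" using fin by simp
  finally show ?thesis .
qed

lemma INF_qc:
  assumes nu: "real_prob \<nu>" and mu: "real_prob \<mu>" and s: "s = 1 \<or> s > 2"
  shows "(INF \<pi> \<in> couplings \<nu> \<mu>. cst s \<pi>) = cst s (qc \<nu> \<mu>)"
  by (rule antisym) (auto intro!: INF_lower INF_greatest qc_coupling[OF nu mu] qc_opt[OF _ nu mu s])

lemma W_real_qc:
  assumes nu: "real_prob \<nu>" and mu: "real_prob \<mu>" and s: "s = 1 \<or> s > 2"
  shows "W_real s \<nu> \<mu> = enn2real (cst s (qc \<nu> \<mu>)) powr (1 / s)"
  unfolding W_real_def wasserstein_def using INF_qc[OF nu mu s] by simp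

lemma W_real_le:
  assumes "\<pi> \<in> couplings \<nu> \<mu>" "cst s \<pi> < \<infinity>" "s > 0"
  shows "W_real s \<nu> \<mu> \<le> enn2real (cst s \<pi>) powr (1 / s)"
  unfolding W_real_def wasserstein_def
  by (intro powr_mono2 enn2real_mono INF_lower assms) (use assms in auto)

lemma key:
  assumes q: "q > 1" and pq: "1 / p + 1 / q = 1" and r: "r = (2 - 1 / q) * p"
    and nu: "real_prob \<nu>" and mu: "real_prob \<mu>" and m: "finite_moment r \<nu>" "finite_moment r \<mu>"
  shows "cst 2 (qc \<nu> \<mu>) < \<infinity>"
    and "enn2real (cst 2 (qc \<nu> \<mu>)) \<le> W_real 1 \<nu> \<mu> powr (1 / q) * W_real r \<nu> \<mu> powr (r / p)"
    and "W_real 2 \<nu> \<mu> \<le> enn2real (cst 2 (qc \<nu> \<mu>)) powr (1 / 2)"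
    and "W_real 1 \<nu> \<mu> \<ge> 0" "W_real r \<nu> \<mu> \<ge> 0" "r > 2" "p > 1"
proof -
  have h: "1/p = 1 - 1/q" using pq by simp
  have "0 < 1/q" "1/q < 1" using q by auto
  then have "0 < 1/p" "1/p < 1" using h by auto
  then have p0: "p > 0" by (simp add: zero_less_divide_1_iff)
  with \<open>1/p < 1\<close> have p: "p > 1" by (simp add: divide_less_eq)
  then show "p > 1" .
  have pe: "p = q / (q - 1)" using pq q p by (auto simp: field_simps)
  have r2: "r > 2" using q unfolding r pe by (simp add: field_simps)
  then show "r > 2" .
  define \<pi> where "\<pi> = qc \<nu> \<mu>"
  have c: "\<pi> \<in> couplings \<nu> \<mu>" unfolding \<pi>_def by (rule qc_coupling[OF nu mu])
  note cp = coupling_props[OF c nu mu]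
  have s[measurable_cong]: "sets \<pi> = sets (borel \<Otimes>\<^sub>M borel)" by (rule cp(2))
  have fr: "cst r \<pi> < \<infinity>" using cst_r_fin[OF c nu mu _ m] r2 by simp
  have f1: "cst 1 \<pi> < \<infinity>" using cst_t_fin[OF c nu mu _ _ fr, of 1] r2 by simp
  have f2: "cst 2 \<pi> < \<infinity>" by (rule cst_t_fin[OF c nu mu _ _ fr, of 2]) (use r2 in auto)
  then show "cst 2 (qc \<nu> \<mu>) < \<infinity>" unfolding \<pi>_def .
  define c1 where "c1 = enn2real (cst 1 \<pi>)"
  define cr where "cr = enn2real (cst r \<pi>)"
  have c1: "cst 1 \<pi> = ennreal c1" "c1 \<ge> 0" using f1 unfolding c1_def by (auto simp: less_top)
  have cr: "cst r \<pi> = ennreal cr" "cr \<ge> 0" using fr unfolding cr_def by (auto simp: less_top)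
  have W1: "W_real 1 \<nu> \<mu> = c1"
    using W_real_qc[OF nu mu, of 1] c1 by (simp add: \<pi>_def c1_def)
  have Wr: "W_real r \<nu> \<mu> = cr powr (1 / r)"
    using W_real_qc[OF nu mu, of r] r2 by (simp add: \<pi>_def cr_def)
  show "W_real 1 \<nu> \<mu> \<ge> 0" "W_real r \<nu> \<mu> \<ge> 0" using W1 c1 Wr by auto
  have "cst 2 \<pi> = (\<integral>\<^sup>+ z. ennreal (\<bar>fst z - snd z\<bar> powr (1/q) * \<bar>fst z - snd z\<bar> powr (2 - 1/q)) \<partial>\<pi>)"
    by (intro nn_integral_cong) (simp add: powr_add[symmetric])
  also have "\<dots> \<le> ennreal (c1 powr (1/q) * cr powr (1/p))"
  proof (rule holder_nn[OF q p])
    show "1 / q + 1 / p = 1" using pq by simp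
    show "(\<integral>\<^sup>+ z. ennreal ((\<bar>fst z - snd z\<bar> powr (1/q)) powr q) \<partial>\<pi>) = ennreal c1"
      using q c1 by (simp add: powr_powr)
    show "(\<integral>\<^sup>+ z. ennreal ((\<bar>fst z - snd z\<bar> powr (2 - 1/q)) powr p) \<partial>\<pi>) = ennreal cr"
      using cr by (simp add: powr_powr r)
  qed (use c1 cr in auto)
  finally have "enn2real (cst 2 \<pi>) \<le> c1 powr (1/q) * cr powr (1/p)"
    using f2 by (simp add: enn2real_leI less_top)
  also have "cr powr (1/p) = (cr powr (1 / r)) powr (r / p)"
    using r2 p by (simp add: powr_powr)
  finally show "enn2real (cst 2 (qc \<nu> \<mu>)) \<le> W_real 1 \<nu> \<mu> powr (1 / q) * W_real r \<nu> \<mu> powr (r / p)"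
    unfolding W1 Wr \<pi>_def .
  show "W_real 2 \<nu> \<mu> \<le> enn2real (cst 2 (qc \<nu> \<mu>)) powr (1 / 2)"
    using W_real_le[OF c f2] unfolding \<pi>_def by simp
qed



abbreviation "ecst n s PP \<equiv> \<integral>\<^sup>+ z. ennreal (eucl_dist n (fst z) (snd z) powr s) \<partial>PP"

lemma fst_meas:
  assumes "sets \<pi> = sets (borel \<Otimes>\<^sub>M borel)" "sets \<nu> = sets (borel :: real measure)"
  shows "(fst :: real \<times> real \<Rightarrow> real) \<in> \<pi> \<rightarrow>\<^sub>M \<nu>"
  using assms by (subst measurable_cong_sets[OF assms]) auto

lemma snd_meas:
  assumes "sets \<pi> = sets (borel \<Otimes>\<^sub>M borel)" "sets \<nu> = sets (borel :: real measure)"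
  shows "(snd :: real \<times> real \<Rightarrow> real) \<in> \<pi> \<rightarrow>\<^sub>M \<nu>"
  using assms by (subst measurable_cong_sets[OF assms]) auto

lemma comp_int:
  assumes M: "\<And>i. i \<in> I \<Longrightarrow> prob_space (M i)" and i: "i \<in> I"
    and h: "h \<in> borel_measurable (M i)"
  shows "(\<integral>\<^sup>+ z. h (z i) \<partial>PiM I M) = (\<integral>\<^sup>+ w. h w \<partial>M i)"
proof -
  have "(\<integral>\<^sup>+ w. h w \<partial>M i) = (\<integral>\<^sup>+ w. h w \<partial>distr (PiM I M) (M i) (\<lambda>z. z i))"
    by (subst distr_PiM_component[OF M i]) auto
  also have "\<dots> = (\<integral>\<^sup>+ z. h (z i) \<partial>PiM I M)"
    by (rule nn_integral_distr) (use i h in auto)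
  finally show ?thesis ..
qed

lemma proj_coupling:
  assumes c: "PP \<in> couplings (PiM {..<n} \<nu>) (PiM {..<n} \<mu>)"
    and rp: "\<And>i. i < n \<Longrightarrow> real_prob (\<nu> i) \<and> real_prob (\<mu> i)" and i: "i < n"
  shows "distr PP (borel \<Otimes>\<^sub>M borel) (\<lambda>z. (fst z i, snd z i)) \<in> couplings (\<nu> i) (\<mu> i)"
proof -
  have ps: "prob_space PP" and s: "sets PP = sets (PiM {..<n} \<nu> \<Otimes>\<^sub>M PiM {..<n} \<mu>)"
    and d1: "distr PP (PiM {..<n} \<nu>) fst = PiM {..<n} \<nu>" and d2: "distr PP (PiM {..<n} \<mu>) snd = PiM {..<n} \<mu>"
    using c unfolding couplings_def by auto
 have iI: "i \<in> {..<n}" using i by simp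
  have sn: "sets (\<nu> i) = sets borel" "sets (\<mu> i) = sets borel" using rp[OF i] by (auto simp: real_prob_def)
  have f1: "(\<lambda>z. fst z i) \<in> PP \<rightarrow>\<^sub>M \<nu> i"
    by (subst measurable_cong_sets[OF s refl]) (use iI in measurable)
  have f2: "(\<lambda>z. snd z i) \<in> PP \<rightarrow>\<^sub>M \<mu> i"
    by (subst measurable_cong_sets[OF s refl]) (use iI in measurable)
  have f1': "(\<lambda>z. fst z i) \<in> PP \<rightarrow>\<^sub>M borel" using f1 measurable_cong_sets[OF refl sn(1), of PP] by blast
  have f2': "(\<lambda>z. snd z i) \<in> PP \<rightarrow>\<^sub>M borel" using f2 measurable_cong_sets[OF refl sn(2), of PP] by blast
  have T: "(\<lambda>z. (fst z i, snd z i)) \<in> PP \<rightarrow>\<^sub>M borel \<Otimes>\<^sub>M borel"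
    using f1' f2' by (rule measurable_Pair)
  have pr: "\<And>j. j \<in> {..<n} \<Longrightarrow> prob_space (\<nu> j)" "\<And>j. j \<in> {..<n} \<Longrightarrow> prob_space (\<mu> j)"
    using rp by (auto simp: real_prob_def)
  have "prob_space (distr PP (borel \<Otimes>\<^sub>M borel) (\<lambda>z. (fst z i, snd z i)))"
    by (rule prob_space.prob_space_distr[OF ps T])
  moreover have "sets (distr PP (borel \<Otimes>\<^sub>M borel) (\<lambda>z. (fst z i, snd z i))) = sets (\<nu> i \<Otimes>\<^sub>M \<mu> i)"
    using sn by (auto intro!: sets_pair_measure_cong)
  moreover have "distr (distr PP (borel \<Otimes>\<^sub>M borel) (\<lambda>z. (fst z i, snd z i))) (\<nu> i) fst = \<nu> i"
  proof -
    have "distr (distr PP (borel \<Otimes>\<^sub>M borel) (\<lambda>z. (fst z i, snd z i))) (\<nu> i) fst = distr PP (\<nu> i) (\<lambda>z. fst z i)"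
      by (subst distr_distr) (auto simp: comp_def T measurable_cong_sets[OF refl sn(1)])
    also have "\<dots> = distr (distr PP (PiM {..<n} \<nu>) fst) (\<nu> i) (\<lambda>x. x i)"
      by (subst distr_distr) (auto simp: comp_def measurable_cong_sets[OF s refl] i)
    also have "\<dots> = \<nu> i" unfolding d1 by (rule distr_PiM_component[OF pr(1)]) (use i in auto)
    finally show ?thesis .
  qed
  moreover have "distr (distr PP (borel \<Otimes>\<^sub>M borel) (\<lambda>z. (fst z i, snd z i))) (\<mu> i) snd = \<mu> i"
  proof -
    have "distr (distr PP (borel \<Otimes>\<^sub>M borel) (\<lambda>z. (fst z i, snd z i))) (\<mu> i) snd = distr PP (\<mu> i) (\<lambda>z. snd z i)"
      by (subst distr_distr) (auto simp: comp_def T measurable_cong_sets[OF refl sn(2)])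
    also have "\<dots> = distr (distr PP (PiM {..<n} \<mu>) snd) (\<mu> i) (\<lambda>x. x i)"
      by (subst distr_distr) (auto simp: comp_def measurable_cong_sets[OF s refl] i)
    also have "\<dots> = \<mu> i" unfolding d2 by (rule distr_PiM_component[OF pr(2)]) (use i in auto)
    finally show ?thesis .
  qed
  ultimately show ?thesis unfolding couplings_def by auto
qed



lemma coord_le_eucl: "i < n \<Longrightarrow> \<bar>x i - y i\<bar> \<le> eucl_dist n x y"
proof -
  assume i: "i < n"
  have "(x i - y i)^2 \<le> (\<Sum>j<n. (x j - y j)^2)"
    by (rule member_le_sum[where f="\<lambda>j. (x j - y j)^2"]) (use i in auto)
  then have "sqrt ((x i - y i)^2) \<le> sqrt (\<Sum>j<n. (x j - y j)^2)" by (rule real_sqrt_le_mono)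
  then show ?thesis by (simp add: eucl_dist_def)
qed

lemma eucl_nonneg: "eucl_dist n x y \<ge> 0"
  by (simp add: eucl_dist_def sum_nonneg)

lemma eucl_r_bound:
  assumes r: "r > 0"
  shows "eucl_dist n x y powr r \<le> real n powr r * (\<Sum>i<n. \<bar>x i - y i\<bar> powr r)"
proof (cases "n = 0")
  case True then show ?thesis by (simp add: eucl_dist_def)
next
  case False
  define d where "d i = \<bar>x i - y i\<bar>" for i
  define m where "m = Max (d ` {..<n})"
  have "m \<in> d ` {..<n}" unfolding m_def using False by (intro Max_in) auto
  then obtain j where j: "j < n" "m = d j" by auto
  have dj: "d i \<le> d j" if "i < n" for i using j that unfolding m_def by (metis Max_ge finite_imageI finite_lessThan image_eqI lessThan_iff)
  have "(\<Sum>i<n. (x i - y i)^2) \<le> (\<Sum>i<n. (d j)^2)"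
  proof (intro sum_mono)
    fix i assume "i \<in> {..<n}"
    then have "d i \<le> d j" using dj by auto
    then have "(d i)^2 \<le> (d j)^2" by (intro power_mono) (auto simp: d_def)
    then show "(x i - y i)^2 \<le> (d j)^2" by (simp add: d_def)
  qed
  also have "\<dots> \<le> (real n * d j)^2"
  proof -
    have "real n \<le> real n * real n" using False by simp
    then have "real n * (d j)^2 \<le> (real n * real n) * (d j)^2" by (intro mult_right_mono) auto
    then show ?thesis by (simp add: power2_eq_square algebra_simps)
  qed
  finally have "eucl_dist n x y \<le> sqrt ((real n * d j)^2)" unfolding eucl_dist_def by (intro real_sqrt_le_mono) simp
  also have "\<dots> = real n * d j" by (simp add: d_def)
  finally have "eucl_dist n x y powr r \<le> (real n * d j) powr r"
    using r by (intro powr_mono2) (auto simp: eucl_nonneg)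
  also have "\<dots> = real n powr r * d j powr r" by (simp add: powr_mult d_def)
  also have "\<dots> \<le> real n powr r * (\<Sum>i<n. d i powr r)"
    by (intro mult_left_mono member_le_sum[where f="\<lambda>i. d i powr r"]) (use j in auto)
  finally show ?thesis unfolding d_def .
qed

definition pc :: "nat \<Rightarrow> (nat \<Rightarrow> real measure) \<Rightarrow> (nat \<Rightarrow> real measure) \<Rightarrow> ((nat \<Rightarrow> real) \<times> (nat \<Rightarrow> real)) measure" where
  "pc n \<nu> \<mu> = distr (PiM {..<n} (\<lambda>i. qc (\<nu> i) (\<mu> i))) (PiM {..<n} \<nu> \<Otimes>\<^sub>M PiM {..<n} \<mu>)
     (\<lambda>z. (\<lambda>i\<in>{..<n}. fst (z i), \<lambda>i\<in>{..<n}. snd (z i)))"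

context
  fixes n :: nat and \<nu> \<mu> :: "nat \<Rightarrow> real measure"
  assumes rp: "\<And>i. i < n \<Longrightarrow> real_prob (\<nu> i) \<and> real_prob (\<mu> i)"
begin

lemma qcs: "i < n \<Longrightarrow> qc (\<nu> i) (\<mu> i) \<in> couplings (\<nu> i) (\<mu> i)"
  using rp by (auto intro: qc_coupling)

lemma qcs_props: "i < n \<Longrightarrow> prob_space (qc (\<nu> i) (\<mu> i)) \<and> sets (qc (\<nu> i) (\<mu> i)) = sets (borel \<Otimes>\<^sub>M borel)"
  using coupling_props[OF qcs] rp by auto

lemma T_meas: "(\<lambda>z. (\<lambda>i\<in>{..<n}. fst (z i), \<lambda>i\<in>{..<n}. snd (z i))) \<in>
   PiM {..<n} (\<lambda>i. qc (\<nu> i) (\<mu> i)) \<rightarrow>\<^sub>M PiM {..<n} \<nu> \<Otimes>\<^sub>M PiM {..<n} \<mu>"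
proof (intro measurable_Pair measurable_restrict)
  fix i assume i: "i \<in> {..<n}"
  have sn: "sets (\<nu> i) = sets borel" "sets (\<mu> i) = sets borel" using rp i by (auto simp: real_prob_def)
  show "(\<lambda>z. fst (z i)) \<in> PiM {..<n} (\<lambda>i. qc (\<nu> i) (\<mu> i)) \<rightarrow>\<^sub>M \<nu> i"
    by (rule measurable_compose[OF measurable_component_singleton[OF i] fst_meas]) (use qcs_props i sn in auto)
  show "(\<lambda>z. snd (z i)) \<in> PiM {..<n} (\<lambda>i. qc (\<nu> i) (\<mu> i)) \<rightarrow>\<^sub>M \<mu> i"
    by (rule measurable_compose[OF measurable_component_singleton[OF i] snd_meas]) (use qcs_props i sn in auto)
qed

lemma pc_coupling: "pc n \<nu> \<mu> \<in> couplings (PiM {..<n} \<nu>) (PiM {..<n} \<mu>)"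
proof -
  have ps: "prob_space (PiM {..<n} (\<lambda>i. qc (\<nu> i) (\<mu> i)))"
    by (intro prob_space_PiM) (use qcs_props in auto)
  have pn: "\<And>i. i \<in> {..<n} \<Longrightarrow> prob_space (\<nu> i)" "\<And>i. i \<in> {..<n} \<Longrightarrow> prob_space (\<mu> i)"
    using rp by (auto simp: real_prob_def)
  have "prob_space (pc n \<nu> \<mu>)" unfolding pc_def by (rule prob_space.prob_space_distr[OF ps T_meas])
  moreover have "sets (pc n \<nu> \<mu>) = sets (PiM {..<n} \<nu> \<Otimes>\<^sub>M PiM {..<n} \<mu>)" unfolding pc_def by simp
  moreover have "distr (pc n \<nu> \<mu>) (PiM {..<n} \<nu>) fst = PiM {..<n} \<nu>"
  proof -
    have "distr (pc n \<nu> \<mu>) (PiM {..<n} \<nu>) fst = distr (PiM {..<n} (\<lambda>i. qc (\<nu> i) (\<mu> i))) (PiM {..<n} \<nu>) (compose {..<n} fst)"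
      unfolding pc_def by (subst distr_distr) (auto simp: T_meas comp_def compose_def[abs_def])
    also have "\<dots> = PiM {..<n} (\<lambda>i. distr (qc (\<nu> i) (\<mu> i)) (\<nu> i) fst)"
    proof (rule distr_PiM_finite_prob_space')
      fix i assume i: "i \<in> {..<n}"
      have sn: "sets (\<nu> i) = sets borel" using rp i by (auto simp: real_prob_def)
      show "fst \<in> qc (\<nu> i) (\<mu> i) \<rightarrow>\<^sub>M \<nu> i" by (rule fst_meas) (use qcs_props i sn in auto)
    qed (use qcs_props pn in auto)
    also have "\<dots> = PiM {..<n} \<nu>"
      by (intro PiM_cong refl) (use coupling_props[OF qcs] rp in auto)
    finally show ?thesis .
  qed
  moreover have "distr (pc n \<nu> \<mu>) (PiM {..<n} \<mu>) snd = PiM {..<n} \<mu>"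
  proof -
    have "distr (pc n \<nu> \<mu>) (PiM {..<n} \<mu>) snd = distr (PiM {..<n} (\<lambda>i. qc (\<nu> i) (\<mu> i))) (PiM {..<n} \<mu>) (compose {..<n} snd)"
      unfolding pc_def by (subst distr_distr) (auto simp: T_meas comp_def compose_def[abs_def])
    also have "\<dots> = PiM {..<n} (\<lambda>i. distr (qc (\<nu> i) (\<mu> i)) (\<mu> i) snd)"
    proof (rule distr_PiM_finite_prob_space')
      fix i assume i: "i \<in> {..<n}"
      have sn: "sets (\<mu> i) = sets borel" using rp i by (auto simp: real_prob_def)
      show "snd \<in> qc (\<nu> i) (\<mu> i) \<rightarrow>\<^sub>M \<mu> i" by (rule snd_meas) (use qcs_props i sn in auto)
    qed (use qcs_props pn in auto)
    also have "\<dots> = PiM {..<n} \<mu>"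
      by (intro PiM_cong refl) (use coupling_props[OF qcs] rp in auto)
    finally show ?thesis .
  qed
  ultimately show ?thesis unfolding couplings_def by auto
qed

end



lemma comp_borel:
  assumes "i < n" "sets (\<nu> i) = sets (borel :: real measure)"
  shows "(\<lambda>w. fst w i) \<in> borel_measurable (PiM {..<n} \<nu> \<Otimes>\<^sub>M PiM {..<n} \<mu>)"
proof -
  have "(\<lambda>w. fst w i) \<in> (PiM {..<n} \<nu> \<Otimes>\<^sub>M PiM {..<n} \<mu>) \<rightarrow>\<^sub>M \<nu> i"
    by (rule measurable_compose[OF measurable_fst measurable_component_singleton]) (use assms in auto)
  then show ?thesis using measurable_cong_sets[OF refl assms(2), of "PiM {..<n} \<nu> \<Otimes>\<^sub>M PiM {..<n} \<mu>"] by blast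
qed

lemma comp_borel2:
  assumes "i < n" "sets (\<mu> i) = sets (borel :: real measure)"
  shows "(\<lambda>w. snd w i) \<in> borel_measurable (PiM {..<n} \<nu> \<Otimes>\<^sub>M PiM {..<n} \<mu>)"
proof -
  have "(\<lambda>w. snd w i) \<in> (PiM {..<n} \<nu> \<Otimes>\<^sub>M PiM {..<n} \<mu>) \<rightarrow>\<^sub>M \<mu> i"
    by (rule measurable_compose[OF measurable_snd measurable_component_singleton]) (use assms in auto)
  then show ?thesis using measurable_cong_sets[OF refl assms(2), of "PiM {..<n} \<nu> \<Otimes>\<^sub>M PiM {..<n} \<mu>"] by blast
qed

lemma eucl_meas:
  assumes "\<And>i. i < n \<Longrightarrow> sets (\<nu> i) = sets borel \<and> sets (\<mu> i) = sets borel"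
  shows "(\<lambda>w. eucl_dist n (fst w) (snd w)) \<in> borel_measurable (PiM {..<n} \<nu> \<Otimes>\<^sub>M PiM {..<n} \<mu>)"
  unfolding eucl_dist_def
  by (rule measurable_compose[OF _ borel_measurable_sqrt], intro borel_measurable_sum borel_measurable_power borel_measurable_diff comp_borel comp_borel2)
     (use assms in auto)

context
  fixes n :: nat and \<nu> \<mu> :: "nat \<Rightarrow> real measure"
  assumes rp: "\<And>i. i < n \<Longrightarrow> real_prob (\<nu> i) \<and> real_prob (\<mu> i)"
begin

lemma sets_nm: "\<And>i. i < n \<Longrightarrow> sets (\<nu> i) = sets borel \<and> sets (\<mu> i) = sets borel"
  using rp by (auto simp: real_prob_def)

lemma comp_int_qc:
  assumes i: "i < n" and h: "h \<in> borel_measurable (borel \<Otimes>\<^sub>M borel)"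
  shows "(\<integral>\<^sup>+ z. h (z i) \<partial>PiM {..<n} (\<lambda>i. qc (\<nu> i) (\<mu> i))) = (\<integral>\<^sup>+ w. h w \<partial>qc (\<nu> i) (\<mu> i))"
proof (rule comp_int)
  show "h \<in> borel_measurable (qc (\<nu> i) (\<mu> i))"
  proof -
    have ss: "sets (qc (\<nu> i) (\<mu> i)) = sets (borel \<Otimes>\<^sub>M borel)" using qcs_props[of n \<nu> \<mu> i] rp i by auto
    show ?thesis using h measurable_cong_sets[OF ss refl] by blast
  qed
qed (use qcs_props[of n \<nu> \<mu>] rp i in auto)

lemma comp_meas_qc:
  assumes i: "i < n" and h: "h \<in> borel_measurable (borel \<Otimes>\<^sub>M borel)"
  shows "(\<lambda>z. h (z i)) \<in> borel_measurable (PiM {..<n} (\<lambda>i. qc (\<nu> i) (\<mu> i)))"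
proof -
  have "h \<in> borel_measurable (qc (\<nu> i) (\<mu> i))"
  proof -
    have ss: "sets (qc (\<nu> i) (\<mu> i)) = sets (borel \<Otimes>\<^sub>M borel)" using qcs_props[of n \<nu> \<mu> i] rp i by auto
    show ?thesis using h measurable_cong_sets[OF ss refl] by blast
  qed
  then show ?thesis by (rule measurable_compose[OF measurable_component_singleton, rotated]) (use i in auto)
qed

lemma pc_cost_eq:
  "ecst n s (pc n \<nu> \<mu>) = (\<integral>\<^sup>+ z. ennreal (sqrt (\<Sum>i<n. (fst (z i) - snd (z i))^2) powr s) \<partial>PiM {..<n} (\<lambda>i. qc (\<nu> i) (\<mu> i)))"
  unfolding pc_def
  apply (subst nn_integral_distr[OF T_meas[OF rp]])
  using eucl_meas[OF sets_nm] apply measurable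
  by (intro nn_integral_cong) (simp add: eucl_dist_def)

lemma pc_cost2: "ecst n 2 (pc n \<nu> \<mu>) = (\<Sum>i<n. cst 2 (qc (\<nu> i) (\<mu> i)))"
proof -
  have m: "(\<lambda>w::real\<times>real. ennreal (\<bar>fst w - snd w\<bar> powr 2)) \<in> borel_measurable (borel \<Otimes>\<^sub>M borel)" by measurable
  have "ecst n 2 (pc n \<nu> \<mu>) = (\<integral>\<^sup>+ z. (\<Sum>i<n. ennreal (\<bar>fst (z i) - snd (z i)\<bar> powr 2)) \<partial>PiM {..<n} (\<lambda>i. qc (\<nu> i) (\<mu> i)))"
    unfolding pc_cost_eq by (intro nn_integral_cong) (simp add: sum_nonneg)
  also have "\<dots> = (\<Sum>i<n. \<integral>\<^sup>+ z. ennreal (\<bar>fst (z i) - snd (z i)\<bar> powr 2) \<partial>PiM {..<n} (\<lambda>i. qc (\<nu> i) (\<mu> i)))"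
    by (intro nn_integral_sum) (use comp_meas_qc[OF _ m] in auto)
  also have "\<dots> = (\<Sum>i<n. cst 2 (qc (\<nu> i) (\<mu> i)))"
    by (intro sum.cong refl) (use comp_int_qc[OF _ m] in auto)
  finally show ?thesis .
qed

lemma pc_costr:
  assumes r: "r > 0"
  shows "ecst n r (pc n \<nu> \<mu>) \<le> ennreal (real n powr r) * (\<Sum>i<n. cst r (qc (\<nu> i) (\<mu> i)))"
proof -
  have m: "(\<lambda>w::real\<times>real. ennreal (\<bar>fst w - snd w\<bar> powr r)) \<in> borel_measurable (borel \<Otimes>\<^sub>M borel)" by measurable
  have "ecst n r (pc n \<nu> \<mu>) \<le> (\<integral>\<^sup>+ z. ennreal (real n powr r) * (\<Sum>i<n. ennreal (\<bar>fst (z i) - snd (z i)\<bar> powr r)) \<partial>PiM {..<n} (\<lambda>i. qc (\<nu> i) (\<mu> i)))"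
    unfolding pc_cost_eq
  proof (intro nn_integral_mono)
    fix z :: "nat \<Rightarrow> real \<times> real"
    have "sqrt (\<Sum>i<n. (fst (z i) - snd (z i))^2) powr r \<le> real n powr r * (\<Sum>i<n. \<bar>fst (z i) - snd (z i)\<bar> powr r)"
      using eucl_r_bound[OF r, of n "\<lambda>i. fst (z i)" "\<lambda>i. snd (z i)"] by (simp add: eucl_dist_def)
    then show "ennreal (sqrt (\<Sum>i<n. (fst (z i) - snd (z i))^2) powr r) \<le> ennreal (real n powr r) * (\<Sum>i<n. ennreal (\<bar>fst (z i) - snd (z i)\<bar> powr r))"
      by (simp add: ennreal_mult'[symmetric] ennreal_leI)
  qed
  also have "\<dots> = ennreal (real n powr r) * (\<Sum>i<n. \<integral>\<^sup>+ z. ennreal (\<bar>fst (z i) - snd (z i)\<bar> powr r) \<partial>PiM {..<n} (\<lambda>i. qc (\<nu> i) (\<mu> i)))"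
  proof -
    have sm: "(\<lambda>z. \<Sum>i<n. ennreal (\<bar>fst (z i) - snd (z i)\<bar> powr r)) \<in> borel_measurable (PiM {..<n} (\<lambda>i. qc (\<nu> i) (\<mu> i)))"
      by (intro borel_measurable_sum comp_meas_qc[OF _ m]) auto
    show ?thesis
      apply (subst nn_integral_cmult[OF sm])
      apply (subst nn_integral_sum)
      using comp_meas_qc[OF _ m] by auto
  qed
  also have "\<dots> = ennreal (real n powr r) * (\<Sum>i<n. cst r (qc (\<nu> i) (\<mu> i)))"
    by (intro arg_cong2[where f="(*)"] sum.cong refl) (use comp_int_qc[OF _ m] in auto)
  finally show ?thesis .
qed

lemma Ti_meas:
  assumes c: "PP \<in> couplings (PiM {..<n} \<nu>) (PiM {..<n} \<mu>)" and i: "i < n"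
  shows "(\<lambda>z. (fst z i, snd z i)) \<in> PP \<rightarrow>\<^sub>M borel \<Otimes>\<^sub>M borel"
proof -
  have s: "sets PP = sets (PiM {..<n} \<nu> \<Otimes>\<^sub>M PiM {..<n} \<mu>)" using c unfolding couplings_def by auto
  show ?thesis
    by (subst measurable_cong_sets[OF s refl], intro measurable_Pair comp_borel comp_borel2) (use sets_nm i in auto)
qed

lemma proj_lower:
  assumes c: "PP \<in> couplings (PiM {..<n} \<nu>) (PiM {..<n} \<mu>)" and i: "i < n" and s: "s > 0"
  shows "(INF \<pi> \<in> couplings (\<nu> i) (\<mu> i). cst s \<pi>) \<le> ecst n s PP"
proof -
  have "(INF \<pi> \<in> couplings (\<nu> i) (\<mu> i). cst s \<pi>) \<le> cst s (distr PP (borel \<Otimes>\<^sub>M borel) (\<lambda>z. (fst z i, snd z i)))"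
    by (intro INF_lower proj_coupling[OF c rp i])
  also have "\<dots> = (\<integral>\<^sup>+ z. ennreal (\<bar>fst z i - snd z i\<bar> powr s) \<partial>PP)"
    by (subst nn_integral_distr[OF Ti_meas[OF c i]]) auto
  also have "\<dots> \<le> ecst n s PP"
    by (intro nn_integral_mono ennreal_leI powr_mono2 coord_le_eucl) (use s i in auto)
  finally show ?thesis .
qed

lemma W_lower:
  assumes i: "i < n" and s: "s > 0"
    and fin: "(INF PP \<in> couplings (PiM {..<n} \<nu>) (PiM {..<n} \<mu>). ecst n s PP) < \<infinity>"
  shows "W_real s (\<nu> i) (\<mu> i) \<le> W_eucl n s (PiM {..<n} \<nu>) (PiM {..<n} \<mu>)"
  unfolding W_real_def W_eucl_def wasserstein_def
proof (intro powr_mono2 enn2real_mono INF_greatest proj_lower)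
  show "(INF PP \<in> couplings (PiM {..<n} \<nu>) (PiM {..<n} \<mu>). ecst n s PP) < top" using fin by simp
qed (use s i in auto)

end



lemma final_arith:
  fixes X A B c p q r :: real
  assumes "0 \<le> X" "0 \<le> A" "0 \<le> B" "0 \<le> c" "X \<le> c * (A powr (1/q) * B powr (r/p))"
    "p > 0" "q > 0" "r = (2 - 1/q) * p"
  shows "X powr (1/2) \<le> c powr (1/2) * A powr (1/(2*q)) * B powr (1 - 1/(2*q))"
proof -
  have "X powr (1/2) \<le> (c * (A powr (1/q) * B powr (r/p))) powr (1/2)"
    using assms by (intro powr_mono2) auto
  also have "\<dots> = c powr (1/2) * (A powr (1/q)) powr (1/2) * (B powr (r/p)) powr (1/2)"
    using assms by (simp add: powr_mult)
  also have "\<dots> = c powr (1/2) * A powr (1/(2*q)) * B powr (r/(2*p))"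
    using assms by (simp add: powr_powr mult.commute)
  also have "r/(2*p) = 1 - 1/(2*q)" using assms by (simp add: field_simps)
  finally show ?thesis .
qed

lemma ecst_t_fin:
  assumes ps: "prob_space PP" and s: "sets PP = sets (PiM {..<n} \<nu> \<Otimes>\<^sub>M PiM {..<n} \<mu>)"
    and sn: "\<And>i. i < n \<Longrightarrow> sets (\<nu> i) = sets borel \<and> sets (\<mu> i) = sets borel"
    and t: "0 < t" "t \<le> r" and fin: "ecst n r PP < \<infinity>"
  shows "ecst n t PP < \<infinity>"
proof -
  interpret prob_space PP by (rule ps)
  have em: "(\<lambda>w. eucl_dist n (fst w) (snd w)) \<in> borel_measurable PP"
    by (subst measurable_cong_sets[OF s refl]) (rule eucl_meas[OF sn])
  have "ecst n t PP \<le> (\<integral>\<^sup>+ z. 1 + ennreal (eucl_dist n (fst z) (snd z) powr r) \<partial>PP)"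
  proof (intro nn_integral_mono)
    fix z :: "(nat \<Rightarrow> real) \<times> (nat \<Rightarrow> real)"
    have "ennreal (eucl_dist n (fst z) (snd z) powr t) \<le> ennreal (1 + eucl_dist n (fst z) (snd z) powr r)"
      by (intro ennreal_leI pow_bound t eucl_nonneg)
    also have "\<dots> = 1 + ennreal (eucl_dist n (fst z) (snd z) powr r)" by (subst ennreal_plus) auto
    finally show "ennreal (eucl_dist n (fst z) (snd z) powr t) \<le> 1 + ennreal (eucl_dist n (fst z) (snd z) powr r)" .
  qed
  also have "\<dots> = 1 + ecst n r PP"
  proof -
    have "(\<integral>\<^sup>+ z. 1 + ennreal (eucl_dist n (fst z) (snd z) powr r) \<partial>PP) = (\<integral>\<^sup>+ z. 1 \<partial>PP) + ecst n r PP"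
      by (rule nn_integral_add) (use em in auto)
    moreover have "(\<integral>\<^sup>+ z. 1 \<partial>PP) = 1" by (simp add: emeasure_space_1)
    ultimately show ?thesis by simp
  qed
  also have "\<dots> < \<infinity>" using fin by simp
  finally show ?thesis .
qed

lemma W_eucl_le:
  assumes "PP \<in> couplings M N" "ecst n s PP < \<infinity>" "s > 0"
  shows "W_eucl n s M N \<le> enn2real (ecst n s PP) powr (1 / s)"
  unfolding W_eucl_def wasserstein_def
  by (intro powr_mono2 enn2real_mono INF_lower assms) (use assms in auto)

lemma INF_fin:
  assumes "PP \<in> couplings M N" "ecst n s PP < \<infinity>"
  shows "(INF PP \<in> couplings M N. ecst n s PP) < \<infinity>"
  using INF_lower[OF assms(1), of "ecst n s"] assms(2) by (meson order.strict_trans1)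

lemma pr_arith:
  fixes p q r :: real
  assumes q: "q > 1" and pq: "1 / p + 1 / q = 1" and r: "r = (2 - 1 / q) * p"
  shows "r > 2 \<and> p > 1"
proof -
  have h: "1/p = 1 - 1/q" using pq by linarith
  have "0 < 1/q" "1/q < 1" using q by auto
  then have "0 < 1/p" "1/p < 1" using h by auto
  then have p0: "p > 0" by (simp add: zero_less_divide_1_iff)
  with \<open>1/p < 1\<close> have p: "p > 1" by (simp add: divide_less_eq)
  have pe: "p = q / (q - 1)" using pq q p by (auto simp: field_simps)
  have r2: "r > 2" using q unfolding r pe by (simp add: field_simps)
  show ?thesis using p r2 by simp
qed

theorem lemma6p9:
  fixes q p r :: real
  assumes "q > 1" and "1 / p + 1 / q = 1" and "r = (2 - 1 / q) * p"
  shows "(\<forall>\<nu> \<mu>. real_prob \<nu> \<and> real_prob \<mu> \<and> finite_moment r \<nu> \<and> finite_moment r \<mu> \<longrightarrow>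
            W_real 2 \<nu> \<mu> \<le> W_real 1 \<nu> \<mu> powr (1 / (2 * q)) * W_real r \<nu> \<mu> powr (1 - 1 / (2 * q)))
       \<and> (\<forall>n::nat. \<exists>c::real. \<forall>\<nu> \<mu> :: nat \<Rightarrow> real measure.
            (\<forall>i<n. real_prob (\<nu> i) \<and> real_prob (\<mu> i) \<and> finite_moment r (\<nu> i) \<and> finite_moment r (\<mu> i)) \<longrightarrow>
            W_eucl n 2 (PiM {..<n} \<nu>) (PiM {..<n} \<mu>)
              \<le> c * W_eucl n 1 (PiM {..<n} \<nu>) (PiM {..<n} \<mu>) powr (1 / (2 * q))
                  * W_eucl n r (PiM {..<n} \<nu>) (PiM {..<n} \<mu>) powr (1 - 1 / (2 * q)))"
proof (intro conjI allI impI)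
  note k = key[OF assms]
  have r2: "r > 2" and p1: "p > 1" using pr_arith[OF assms] by auto
  fix \<nu> \<mu> assume h: "real_prob \<nu> \<and> real_prob \<mu> \<and> finite_moment r \<nu> \<and> finite_moment r \<mu>"
  then have nu: "real_prob \<nu>" and mu: "real_prob \<mu>" and m: "finite_moment r \<nu>" "finite_moment r \<mu>" by auto
  note kk = k[OF nu mu m]
  have "W_real 2 \<nu> \<mu> \<le> enn2real (cst 2 (qc \<nu> \<mu>)) powr (1/2)" by (rule kk(3))
  also have "\<dots> \<le> 1 powr (1/2) * W_real 1 \<nu> \<mu> powr (1 / (2 * q)) * W_real r \<nu> \<mu> powr (1 - 1 / (2 * q))"
    by (rule final_arith) (use kk(2,4,5) p1 assms in auto)
  finally show "W_real 2 \<nu> \<mu> \<le> W_real 1 \<nu> \<mu> powr (1 / (2 * q)) * W_real r \<nu> \<mu> powr (1 - 1 / (2 * q))"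
    by simp
next
  note k = key[OF assms]
  have r2: "r > 2" and p1: "p > 1" using pr_arith[OF assms] by auto
  fix n :: nat
  show "\<exists>c::real. \<forall>\<nu> \<mu> :: nat \<Rightarrow> real measure.
            (\<forall>i<n. real_prob (\<nu> i) \<and> real_prob (\<mu> i) \<and> finite_moment r (\<nu> i) \<and> finite_moment r (\<mu> i)) \<longrightarrow>
            W_eucl n 2 (PiM {..<n} \<nu>) (PiM {..<n} \<mu>)
              \<le> c * W_eucl n 1 (PiM {..<n} \<nu>) (PiM {..<n} \<mu>) powr (1 / (2 * q))
                  * W_eucl n r (PiM {..<n} \<nu>) (PiM {..<n} \<mu>) powr (1 - 1 / (2 * q))"
  proof (intro exI allI impI)
    fix \<nu> \<mu> :: "nat \<Rightarrow> real measure"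
    assume h: "\<forall>i<n. real_prob (\<nu> i) \<and> real_prob (\<mu> i) \<and> finite_moment r (\<nu> i) \<and> finite_moment r (\<mu> i)"
    have rp: "\<And>i. i < n \<Longrightarrow> real_prob (\<nu> i) \<and> real_prob (\<mu> i)" using h by auto
    have nu: "\<And>i. i < n \<Longrightarrow> real_prob (\<nu> i)" and mu: "\<And>i. i < n \<Longrightarrow> real_prob (\<mu> i)"
      and m1: "\<And>i. i < n \<Longrightarrow> finite_moment r (\<nu> i)" and m2: "\<And>i. i < n \<Longrightarrow> finite_moment r (\<mu> i)"
      using h by auto
    have "1/q \<le> 2" using assms by (simp add: divide_le_eq)
    define P where "P = pc n \<nu> \<mu>"
    have Pc: "P \<in> couplings (PiM {..<n} \<nu>) (PiM {..<n} \<mu>)" unfolding P_def by (rule pc_coupling[OF rp])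
    have Pps: "prob_space P" and Ps: "sets P = sets (PiM {..<n} \<nu> \<Otimes>\<^sub>M PiM {..<n} \<mu>)"
      using Pc unfolding couplings_def by auto
    have finr_i: "cst r (qc (\<nu> i) (\<mu> i)) < \<infinity>" if i: "i < n" for i
      using cst_r_fin[OF qc_coupling[OF nu[OF i] mu[OF i]] nu[OF i] mu[OF i] _ m1[OF i] m2[OF i]] r2 by simp
    have finr: "ecst n r P < \<infinity>"
    proof -
      have "ecst n r P \<le> ennreal (real n powr r) * (\<Sum>i<n. cst r (qc (\<nu> i) (\<mu> i)))"
        unfolding P_def by (rule pc_costr[OF rp]) (use r2 in auto)
      also have "\<dots> < \<infinity>"
      proof -
        have "(\<Sum>i<n. cst r (qc (\<nu> i) (\<mu> i))) < top" using finr_i by simp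
        then show ?thesis by (simp add: ennreal_mult_less_top)
      qed
      finally show ?thesis .
    qed
    have fin1: "ecst n 1 P < \<infinity>"
      by (rule ecst_t_fin[OF Pps Ps _ _ _ finr]) (use rp r2 in \<open>auto simp: real_prob_def\<close>)
    have fin2_i: "cst 2 (qc (\<nu> i) (\<mu> i)) < \<infinity>" if i: "i < n" for i
      using k(1)[OF nu[OF i] mu[OF i] m1[OF i] m2[OF i]] .
    have fin2: "ecst n 2 P < \<infinity>"
      using pc_cost2[OF rp] fin2_i unfolding P_def by simp
    have eq2: "ecst n 2 P = (\<Sum>i<n. cst 2 (qc (\<nu> i) (\<mu> i)))"
      unfolding P_def by (rule pc_cost2[OF rp])
    define A where "A = W_eucl n 1 (PiM {..<n} \<nu>) (PiM {..<n} \<mu>)"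
    define B where "B = W_eucl n r (PiM {..<n} \<nu>) (PiM {..<n} \<mu>)"
    have A0: "A \<ge> 0" and B0: "B \<ge> 0" unfolding A_def B_def W_eucl_def wasserstein_def by auto
    have WA: "W_real 1 (\<nu> i) (\<mu> i) \<le> A" if i: "i < n" for i
      unfolding A_def by (rule W_lower[OF rp i]) (use INF_fin[OF Pc fin1] in auto)
    have WB: "W_real r (\<nu> i) (\<mu> i) \<le> B" if i: "i < n" for i
      unfolding B_def by (rule W_lower[OF rp i]) (use INF_fin[OF Pc finr] r2 in auto)
    have Xi: "enn2real (cst 2 (qc (\<nu> i) (\<mu> i))) \<le> A powr (1/q) * B powr (r/p)" if i: "i < n" for i
    proof -
      note kk = k[OF nu[OF i] mu[OF i] m1[OF i] m2[OF i]]
      have "enn2real (cst 2 (qc (\<nu> i) (\<mu> i))) \<le> W_real 1 (\<nu> i) (\<mu> i) powr (1 / q) * W_real r (\<nu> i) (\<mu> i) powr (r / p)"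
        by (rule kk(2))
      also have "\<dots> \<le> A powr (1/q) * B powr (r/p)"
        using kk(4,5) WA[OF i] WB[OF i] A0 B0 assms p1 r2 \<open>1/q \<le> 2\<close>
        by (intro mult_mono powr_mono2) auto
      finally show ?thesis .
    qed
    have "enn2real (ecst n 2 P) = (\<Sum>i<n. enn2real (cst 2 (qc (\<nu> i) (\<mu> i))))"
      unfolding eq2 by (subst enn2real_sum) (use fin2_i in auto)
    also have "\<dots> \<le> (\<Sum>i<n. A powr (1/q) * B powr (r/p))"
      by (intro sum_mono Xi) auto
    also have "\<dots> = real n * (A powr (1/q) * B powr (r/p))" by simp
    finally have X: "enn2real (ecst n 2 P) \<le> real n * (A powr (1/q) * B powr (r/p))" .
    have "W_eucl n 2 (PiM {..<n} \<nu>) (PiM {..<n} \<mu>) \<le> enn2real (ecst n 2 P) powr (1/2)"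
      using W_eucl_le[OF Pc fin2] by simp
    also have "\<dots> \<le> real n powr (1/2) * A powr (1/(2*q)) * B powr (1 - 1/(2*q))"
      by (rule final_arith[OF _ A0 B0 _ X]) (use p1 assms in auto)
    finally show "W_eucl n 2 (PiM {..<n} \<nu>) (PiM {..<n} \<mu>)
              \<le> real n powr (1/2) * W_eucl n 1 (PiM {..<n} \<nu>) (PiM {..<n} \<mu>) powr (1 / (2 * q))
                  * W_eucl n r (PiM {..<n} \<nu>) (PiM {..<n} \<mu>) powr (1 - 1 / (2 * q))"
      unfolding A_def B_def .
  qed
qed


end
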